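(* If $(s_1,s_2,p)\in\Gamma_3$ (respectively $\mathbb G_3$), then $\left(\tfrac{s_1}{3}+\omega\tfrac{s_2}{3},\,\omega p\right)\in\Gamma_2$ (respectively $\mathbb G_2$) for every $\omega\in\mathbb T$.
   Context: $\mathbb G_2=\{(z_1+z_2,z_1z_2):|z_1|,|z_2|<1\}$, $\Gamma_2$ the same with $\le1$; $\mathbb G_3=\{(z_1+z_2+z_3,z_1z_2+z_2z_3+z_3z_1,z_1z_2z_3):|z_i|<1\}$, $\Gamma_3$ the same with $|z_i|\le1$. *)

theory Defs
  imports "HOL-Analysis.Analysis"
begin

definition G2 :: "(complex \<times> complex) set" where
  "G2 = {(z1 + z2, z1 * z2) | z1 z2. norm z1 < 1 \<and> norm z2 < 1}"

definition Gamma2 :: "(complex \<times> complex) set" where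
  "Gamma2 = {(z1 + z2, z1 * z2) | z1 z2. norm z1 \<le> 1 \<and> norm z2 \<le> 1}"

definition G3 :: "(complex \<times> complex \<times> complex) set" where
  "G3 = {(z1 + z2 + z3, z1 * z2 + z2 * z3 + z3 * z1, z1 * z2 * z3) | z1 z2 z3.
           norm z1 < 1 \<and> norm z2 < 1 \<and> norm z3 < 1}"

definition Gamma3 :: "(complex \<times> complex \<times> complex) set" where
  "Gamma3 = {(z1 + z2 + z3, z1 * z2 + z2 * z3 + z3 * z1, z1 * z2 * z3) | z1 z2 z3.
           norm z1 \<le> 1 \<and> norm z2 \<le> 1 \<and> norm z3 \<le> 1}"

end

theory Submission
  imports Defs
begin

lemma root_id:
  fixes w1 w2 :: complex
  shows "(w1+w2) - cnj (w1+w2) * (w1*w2) =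
     w1 * of_real (1 - (norm w2)^2) + w2 * of_real (1 - (norm w1)^2)"
proof -
  have e1: "w1 * cnj w1 = of_real ((norm w1)^2)" by (rule complex_norm_square[symmetric])
  have e2: "w2 * cnj w2 = of_real ((norm w2)^2)" by (rule complex_norm_square[symmetric])
  have "(w1+w2) - cnj (w1+w2) * (w1*w2) = w1 + w2 - (w1*cnj w1)*w2 - (w2*cnj w2)*w1"
    by (simp add: algebra_simps)
  also have "\<dots> = w1 * of_real (1 - (norm w2)^2) + w2 * of_real (1 - (norm w1)^2)"
    unfolding e1 e2 by (simp add: algebra_simps)
  finally show ?thesis .
qed

lemma lower_bd:
  fixes w1 w2 :: complex
  assumes "norm w1 \<ge> 1" "norm w2 \<le> 1"
  shows "norm ((w1+w2) - cnj (w1+w2) * (w1*w2)) \<ge>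
     norm w1 * (1 - (norm w2)^2) - norm w2 * ((norm w1)^2 - 1)"
proof -
  have a: "0 \<le> 1 - (norm w2)^2" using assms norm_ge_zero
    by (metis abs_norm_cancel diff_ge_0_iff_ge abs_square_le_1)
  have b: "0 \<le> (norm w1)^2 - 1" using assms
    by (metis abs_norm_cancel diff_ge_0_iff_ge abs_square_less_1 not_less)
  have "norm (w1 * of_real (1 - (norm w2)^2)) - norm (w2 * of_real (1 - (norm w1)^2))
        \<le> norm (w1 * of_real (1 - (norm w2)^2) + w2 * of_real (1 - (norm w1)^2))"
    by (rule norm_diff_ineq)
  moreover have "norm (w1 * of_real (1 - (norm w2)^2)) = norm w1 * (1 - (norm w2)^2)"
    unfolding norm_mult norm_of_real using a by simp
  moreover have "norm (w2 * of_real (1 - (norm w1)^2)) = norm w2 * ((norm w1)^2 - 1)"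
    unfolding norm_mult norm_of_real using b by simp
  ultimately show ?thesis unfolding root_id by simp
qed

lemma crit_closed:
  fixes w1 w2 :: complex
  assumes P: "norm (w1*w2) \<le> 1" and S: "norm (w1+w2) \<le> 2"
   and C: "norm ((w1+w2) - cnj (w1+w2) * (w1*w2)) \<le> 1 - norm (w1*w2)^2"
  shows "norm w1 \<le> 1"
proof (rule ccontr)
  assume "\<not> norm w1 \<le> 1"
  hence r1: "norm w1 > 1" by simp
  have pr: "norm w1 * norm w2 \<le> 1" using P by (simp add: norm_mult)
  have r2: "norm w2 < 1"
  proof (rule ccontr)
    assume "\<not> norm w2 < 1"
    hence "norm w2 \<ge> 1" by simp
    hence "norm w1 \<le> norm w1 * norm w2" using r1 by (simp add: mult_le_cancel_left1)
    hence "norm w1 * norm w2 > 1" using r1 by linarith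
    thus False using pr by simp
  qed
  show False
  proof (cases "norm w1 * norm w2 < 1")
    case True
    have L: "norm ((w1+w2) - cnj (w1+w2) * (w1*w2)) \<ge>
       norm w1 * (1 - (norm w2)^2) - norm w2 * ((norm w1)^2 - 1)"
      using lower_bd r1 r2 by simp
    have "0 < (norm w1 - 1) * (1 - norm w2) * (1 - norm w1 * norm w2)"
      using True r1 r2 by simp
    hence "norm w1 * (1 - (norm w2)^2) - norm w2 * ((norm w1)^2 - 1) > 1 - (norm w1 * norm w2)^2"
      by (simp add: algebra_simps power2_eq_square)
    thus False using L C by (simp add: norm_mult)
  next
    case False
    hence eq: "norm w1 * norm w2 = 1" using pr by simp
    hence "1 - norm (w1*w2)^2 = 0" by (simp add: norm_mult)
    hence "norm ((w1+w2) - cnj (w1+w2) * (w1*w2)) \<le> 0" using C by linarith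
    hence "w1 * of_real (1 - (norm w2)^2) + w2 * of_real (1 - (norm w1)^2) = 0"
      unfolding root_id by simp
    hence e: "w2 * of_real ((norm w1)^2 - 1) = w1 * of_real (1 - (norm w2)^2)"
      by (simp add: algebra_simps)
    define c where "c = (1 - (norm w2)^2) / ((norm w1)^2 - 1)"
    have pos: "(norm w1)^2 - 1 > 0" using r1 by (simp add: one_less_power)
    have c0: "c \<ge> 0" unfolding c_def using pos r2
      by (simp add: abs_square_le_1 less_imp_le)
    have w2c: "w2 = w1 * of_real c"
    proof -
      have nz: "of_real ((norm w1)^2 - 1) \<noteq> (0::complex)"
        using pos by (metis of_real_eq_0_iff less_irrefl)
      have "w2 = w2 * of_real ((norm w1)^2 - 1) / of_real ((norm w1)^2 - 1)"
        by (rule nonzero_mult_div_cancel_right[OF nz, symmetric])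
      also have "\<dots> = w1 * of_real c" unfolding e c_def by (simp add: of_real_divide)
      finally show ?thesis .
    qed
    have "norm w2 = norm w1 * c" using c0 w2c by (simp add: norm_mult)
    have "norm (w1 + w2) = norm (w1 * of_real (1 + c))" unfolding w2c by (simp add: algebra_simps)
    also have "\<dots> = norm w1 + norm w1 * c" unfolding norm_mult norm_of_real using c0
      by (simp add: distrib_left)
    also have "\<dots> = norm w1 + norm w2" using \<open>norm w2 = norm w1 * c\<close> by simp
    finally have ns: "norm (w1+w2) = norm w1 + norm w2" .
    have "(norm w1 + norm w2 - 2) * norm w1 = (norm w1 - 1)^2"
      using eq by (simp add: algebra_simps power2_eq_square)
    moreover have "(norm w1 - 1)^2 > 0" using r1 by simp
    ultimately have "0 < (norm w1 + norm w2 - 2) * norm w1" by simp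
    hence "norm w1 + norm w2 - 2 > 0"
      by (rule zero_less_mult_pos2) (use r1 in linarith)
    thus False using S ns by simp
  qed
qed

lemma crit_open:
  fixes w1 w2 :: complex
  assumes P: "norm (w1*w2) < 1"
   and C: "norm ((w1+w2) - cnj (w1+w2) * (w1*w2)) < 1 - norm (w1*w2)^2"
  shows "norm w1 < 1"
proof (rule ccontr)
  assume "\<not> norm w1 < 1"
  hence r1: "norm w1 \<ge> 1" by simp
  have pr: "norm w1 * norm w2 < 1" using P by (simp add: norm_mult)
  have r2: "norm w2 < 1"
  proof (rule ccontr)
    assume "\<not> norm w2 < 1"
    hence "norm w2 \<ge> 1" by simp
    hence "norm w1 * norm w2 \<ge> 1" using r1
      by (metis mult_mono' mult_1 norm_ge_zero zero_le_one)
    thus False using pr by simp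
  qed
  have L: "norm ((w1+w2) - cnj (w1+w2) * (w1*w2)) \<ge>
       norm w1 * (1 - (norm w2)^2) - norm w2 * ((norm w1)^2 - 1)"
    using lower_bd r1 r2 by simp
  have "0 \<le> (norm w1 - 1) * (1 - norm w2) * (1 - norm w1 * norm w2)"
    using pr r1 r2 by simp
  hence "norm w1 * (1 - (norm w2)^2) - norm w2 * ((norm w1)^2 - 1) \<ge> 1 - (norm w1 * norm w2)^2"
    by (simp add: algebra_simps power2_eq_square)
  thus False using L C by (simp add: norm_mult)
qed


lemma tri3:
  fixes a b c :: complex and x y z :: real
  assumes "x \<ge> 0" "y \<ge> 0" "z \<ge> 0"
  shows "norm (a * of_real x + b * of_real y + c * of_real z) \<le> norm a * x + norm b * y + norm c * z"
proof -
  have "norm (a * of_real x + b * of_real y + c * of_real z)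
     \<le> norm (a * of_real x) + norm (b * of_real y) + norm (c * of_real z)"
    by (meson norm_triangle_ineq add_mono order_trans order_refl)
  also have "\<dots> = norm a * x + norm b * y + norm c * z"
    unfolding norm_mult norm_of_real using assms by simp
  finally show ?thesis .
qed

lemma term_bd:
  fixes a b :: real
  assumes "0 \<le> a" "a \<le> 1" "0 \<le> b" "b \<le> 1"
  shows "a * (1 - b^2) + b * (1 - a^2) \<le> 1 - (a*b)^2"
proof -
  have "0 \<le> (1 - a) * (1 - b) * (1 - a*b)"
    using assms by (simp add: mult_le_one)
  thus ?thesis by (simp add: algebra_simps power2_eq_square)
qed

lemma term_bd_strict:
  fixes a b :: real
  assumes "0 \<le> a" "a < 1" "0 \<le> b" "b < 1"
  shows "a * (1 - b^2) + b * (1 - a^2) < 1 - (a*b)^2"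
proof -
  have "a * b < 1" using assms by (metis less_le_trans mult_less_cancel_right1 less_le mult_left_le_one_le
      mult_eq_0_iff zero_less_one)
  hence "0 < (1 - a) * (1 - b) * (1 - a*b)"
    using assms by simp
  thus ?thesis by (simp add: algebra_simps power2_eq_square)
qed

lemma key:
  fixes z1 z2 z3 \<omega> :: complex
  assumes w: "norm \<omega> = 1"
  defines "s1 \<equiv> z1 + z2 + z3" and "s2 \<equiv> z1 * z2 + z2 * z3 + z3 * z1" and "p \<equiv> z1 * z2 * z3"
  assumes n: "norm z1 \<le> 1" "norm z2 \<le> 1" "norm z3 \<le> 1"
  shows "3 * norm ((s1/3 + \<omega> * s2/3) - cnj (s1/3 + \<omega> * s2/3) * (\<omega> * p)) \<le>
     (norm z1 * (1 - (norm z2 * norm z3)^2) + (norm z2 * norm z3) * (1 - (norm z1)^2))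
   + (norm z2 * (1 - (norm z3 * norm z1)^2) + (norm z3 * norm z1) * (1 - (norm z2)^2))
   + (norm z3 * (1 - (norm z1 * norm z2)^2) + (norm z1 * norm z2) * (1 - (norm z3)^2))"
proof -
  define n1 n2 n3 where "n1 = norm z1" "n2 = norm z2" "n3 = norm z3"
  have e1: "z1 * cnj z1 = of_real (n1^2)" unfolding n1_n2_n3_def by (rule complex_norm_square[symmetric])
  have e2: "z2 * cnj z2 = of_real (n2^2)" unfolding n1_n2_n3_def by (rule complex_norm_square[symmetric])
  have e3: "z3 * cnj z3 = of_real (n3^2)" unfolding n1_n2_n3_def by (rule complex_norm_square[symmetric])
  have ew: "\<omega> * cnj \<omega> = 1" using complex_norm_square[of \<omega>] w by simp
  have A: "s1 - cnj s2 * p = z1 * of_real (1 - (n2*n3)^2) + z2 * of_real (1 - (n3*n1)^2)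
                + z3 * of_real (1 - (n1*n2)^2)"
  proof -
    have "s1 - cnj s2 * p = z1 + z2 + z3 - (z1 * cnj z1) * (z2 * cnj z2) * z3
        - (z2 * cnj z2) * (z3 * cnj z3) * z1 - (z3 * cnj z3) * (z1 * cnj z1) * z2"
      unfolding s1_def s2_def p_def by (simp add: algebra_simps)
    also have "\<dots> = z1 * of_real (1 - (n2*n3)^2) + z2 * of_real (1 - (n3*n1)^2)
                + z3 * of_real (1 - (n1*n2)^2)"
      unfolding e1 e2 e3 by (simp add: algebra_simps power_mult_distrib)
    finally show ?thesis .
  qed
  have B: "s2 - cnj s1 * p = (z2*z3) * of_real (1 - n1^2) + (z3*z1) * of_real (1 - n2^2)
                + (z1*z2) * of_real (1 - n3^2)"
  proof -
    have "s2 - cnj s1 * p = z1*z2 + z2*z3 + z3*z1 - (z1 * cnj z1) * (z2 * z3)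
        - (z2 * cnj z2) * (z3 * z1) - (z3 * cnj z3) * (z1 * z2)"
      unfolding s1_def s2_def p_def by (simp add: algebra_simps)
    also have "\<dots> = (z2*z3) * of_real (1 - n1^2) + (z3*z1) * of_real (1 - n2^2)
                + (z1*z2) * of_real (1 - n3^2)"
      unfolding e1 e2 e3 by (simp add: algebra_simps)
    finally show ?thesis .
  qed
  have C: "3 * ((s1/3 + \<omega> * s2/3) - cnj (s1/3 + \<omega> * s2/3) * (\<omega> * p))
          = (s1 - cnj s2 * p) + \<omega> * (s2 - cnj s1 * p)"
  proof -
    have "3 * ((s1/3 + \<omega> * s2/3) - cnj (s1/3 + \<omega> * s2/3) * (\<omega> * p))
       = s1 + \<omega> * s2 - cnj s1 * \<omega> * p - (\<omega> * cnj \<omega>) * cnj s2 * p"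
      by (simp add: algebra_simps)
    thus ?thesis unfolding ew by (simp add: algebra_simps)
  qed
  have n0: "0 \<le> n1" "0 \<le> n2" "0 \<le> n3" unfolding n1_n2_n3_def by simp_all
  have nn: "n1 \<le> 1" "n2 \<le> 1" "n3 \<le> 1" using n unfolding n1_n2_n3_def by simp_all
  have p1: "n2*n3 \<le> 1" "n3*n1 \<le> 1" "n1*n2 \<le> 1" using n0 nn by (simp_all add: mult_le_one)
  have sq: "(n2*n3)^2 \<le> 1" "(n3*n1)^2 \<le> 1" "(n1*n2)^2 \<le> 1" "n1^2 \<le> 1" "n2^2 \<le> 1" "n3^2 \<le> 1"
    using n0 nn p1 by (simp_all add: power_le_one)
  have nA: "norm (s1 - cnj s2 * p) \<le> n1 * (1 - (n2*n3)^2) + n2 * (1 - (n3*n1)^2) + n3 * (1 - (n1*n2)^2)"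
    unfolding A
  proof -
    have "norm (z1 * of_real (1 - (n2*n3)^2) + z2 * of_real (1 - (n3*n1)^2)
                + z3 * of_real (1 - (n1*n2)^2)) \<le> norm z1 * (1 - (n2*n3)^2) + norm z2 * (1 - (n3*n1)^2) + norm z3 * (1 - (n1*n2)^2)"
      by (rule tri3) (use sq in auto)
    thus "norm (z1 * of_real (1 - (n2*n3)^2) + z2 * of_real (1 - (n3*n1)^2)
                + z3 * of_real (1 - (n1*n2)^2)) \<le> n1 * (1 - (n2*n3)^2) + n2 * (1 - (n3*n1)^2) + n3 * (1 - (n1*n2)^2)"
      by (simp only: n1_n2_n3_def[symmetric])
  qed
  have nB0: "norm (s2 - cnj s1 * p) \<le> norm (z2*z3) * (1 - n1^2) + norm (z3*z1) * (1 - n2^2) + norm (z1*z2) * (1 - n3^2)"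
    unfolding B by (rule tri3) (use sq in auto)
  have nB: "norm (\<omega> * (s2 - cnj s1 * p)) \<le> (n2*n3) * (1 - n1^2) + (n3*n1) * (1 - n2^2) + (n1*n2) * (1 - n3^2)"
    using nB0 w unfolding n1_n2_n3_def by (simp add: norm_mult)
  have "3 * norm ((s1/3 + \<omega> * s2/3) - cnj (s1/3 + \<omega> * s2/3) * (\<omega> * p))
      = norm (3 * ((s1/3 + \<omega> * s2/3) - cnj (s1/3 + \<omega> * s2/3) * (\<omega> * p)))"
    by (subst norm_mult) simp
  also have "\<dots> \<le> norm (s1 - cnj s2 * p) + norm (\<omega> * (s2 - cnj s1 * p))"
    unfolding C by (rule norm_triangle_ineq)
  finally show ?thesis using nA nB unfolding n1_n2_n3_def by (simp add: algebra_simps)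
qed


lemma quad_roots:
  fixes S P :: complex
  obtains w1 w2 where "S = w1 + w2" "P = w1 * w2"
proof -
  define d where "d = csqrt (S^2 - 4*P)"
  have dd: "d^2 = S^2 - 4*P" unfolding d_def by simp
  have "S = (S+d)/2 + (S-d)/2" by (simp add: field_simps)
  moreover have "P = ((S+d)/2) * ((S-d)/2)"
  proof -
    have "((S+d)/2) * ((S-d)/2) = (S^2 - d^2)/4" by (simp add: field_simps power2_eq_square)
    thus ?thesis unfolding dd by simp
  qed
  ultimately show ?thesis using that by blast
qed

lemma tri3':
  fixes a b c :: complex
  shows "norm (a + b + c) \<le> norm a + norm b + norm c"
  by (meson norm_triangle_ineq add_mono order_trans order_refl)

lemma closed_case:
  fixes z1 z2 z3 \<omega> :: complex
  assumes w: "norm \<omega> = 1"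
  defines "s1 \<equiv> z1 + z2 + z3" and "s2 \<equiv> z1 * z2 + z2 * z3 + z3 * z1" and "p \<equiv> z1 * z2 * z3"
  assumes n: "norm z1 \<le> 1" "norm z2 \<le> 1" "norm z3 \<le> 1"
  shows "(s1 / 3 + \<omega> * s2 / 3, \<omega> * p) \<in> Gamma2"
proof -
  define S where "S = s1 / 3 + \<omega> * s2 / 3"
  define P where "P = \<omega> * p"
  obtain w1 w2 where SP: "S = w1 + w2" "P = w1 * w2" by (rule quad_roots)
  define n1 n2 n3 where "n1 = norm z1" "n2 = norm z2" "n3 = norm z3"
  have n0: "0 \<le> n1" "0 \<le> n2" "0 \<le> n3" unfolding n1_n2_n3_def by simp_all
  have nn: "n1 \<le> 1" "n2 \<le> 1" "n3 \<le> 1" using n unfolding n1_n2_n3_def by simp_all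
  have p1: "n2*n3 \<le> 1" "n3*n1 \<le> 1" "n1*n2 \<le> 1" using n0 nn by (simp_all add: mult_le_one)
  have nP: "norm P = n1*n2*n3" unfolding P_def p_def n1_n2_n3_def using w by (simp add: norm_mult)
  have P1: "norm P \<le> 1" unfolding nP using n0 nn p1 by (simp add: mult_le_one)
  have ns1: "norm s1 \<le> 3" unfolding s1_def using tri3'[of z1 z2 z3] n by simp
  have ns2: "norm s2 \<le> 3"
  proof -
    have "norm s2 \<le> norm (z1*z2) + norm (z2*z3) + norm (z3*z1)" unfolding s2_def by (rule tri3')
    also have "\<dots> = n1*n2 + n2*n3 + n3*n1" unfolding n1_n2_n3_def by (simp add: norm_mult)
    finally show ?thesis using p1 by simp
  qed
  have S2: "norm S \<le> 2"
  proof -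
    have "norm S \<le> norm (s1/3) + norm (\<omega> * s2/3)" unfolding S_def by (rule norm_triangle_ineq)
    also have "\<dots> = norm s1 / 3 + norm s2 / 3" using w by (simp add: norm_mult norm_divide)
    finally show ?thesis using ns1 ns2 by simp
  qed
  have K: "3 * norm (S - cnj S * P) \<le>
     (n1 * (1 - (n2 * n3)^2) + (n2 * n3) * (1 - n1^2))
   + (n2 * (1 - (n3 * n1)^2) + (n3 * n1) * (1 - n2^2))
   + (n3 * (1 - (n1 * n2)^2) + (n1 * n2) * (1 - n3^2))"
    unfolding S_def P_def s1_def s2_def p_def n1_n2_n3_def by (rule key[OF w n])
  have t1: "n1 * (1 - (n2 * n3)^2) + (n2 * n3) * (1 - n1^2) \<le> 1 - (n1*n2*n3)^2"
    using term_bd[of n1 "n2*n3"] n0 nn p1 by (simp add: mult.assoc)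
  have t2: "n2 * (1 - (n3 * n1)^2) + (n3 * n1) * (1 - n2^2) \<le> 1 - (n1*n2*n3)^2"
    using term_bd[of n2 "n3*n1"] n0 nn p1 by (simp add: mult_ac)
  have t3: "n3 * (1 - (n1 * n2)^2) + (n1 * n2) * (1 - n3^2) \<le> 1 - (n1*n2*n3)^2"
    using term_bd[of n3 "n1*n2"] n0 nn p1 by (simp add: mult_ac)
  have C: "norm (S - cnj S * P) \<le> 1 - norm P ^ 2" using K t1 t2 t3 unfolding nP by linarith
  have a1: "norm w1 \<le> 1" using crit_closed[of w1 w2] P1 S2 C unfolding SP by simp
  have a2: "norm w2 \<le> 1" using crit_closed[of w2 w1] P1 S2 C unfolding SP
    by (simp add: add.commute mult.commute)
  have "(S, P) \<in> Gamma2" unfolding Gamma2_def SP using a1 a2 by blast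
  thus ?thesis unfolding S_def P_def .
qed

lemma prod_lt1:
  fixes a b :: real
  assumes "0 \<le> a" "a < 1" "0 \<le> b" "b < 1"
  shows "a * b < 1"
proof -
  have "a * b \<le> b" using assms by (simp add: mult_left_le_one_le)
  thus ?thesis using assms by simp
qed

lemma open_case:
  fixes z1 z2 z3 \<omega> :: complex
  assumes w: "norm \<omega> = 1"
  defines "s1 \<equiv> z1 + z2 + z3" and "s2 \<equiv> z1 * z2 + z2 * z3 + z3 * z1" and "p \<equiv> z1 * z2 * z3"
  assumes n: "norm z1 < 1" "norm z2 < 1" "norm z3 < 1"
  shows "(s1 / 3 + \<omega> * s2 / 3, \<omega> * p) \<in> G2"
proof -
  define S where "S = s1 / 3 + \<omega> * s2 / 3"
  define P where "P = \<omega> * p"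
  obtain w1 w2 where SP: "S = w1 + w2" "P = w1 * w2" by (rule quad_roots)
  define n1 n2 n3 where "n1 = norm z1" "n2 = norm z2" "n3 = norm z3"
  have n0: "0 \<le> n1" "0 \<le> n2" "0 \<le> n3" unfolding n1_n2_n3_def by simp_all
  have nn: "n1 < 1" "n2 < 1" "n3 < 1" using n unfolding n1_n2_n3_def by simp_all
  have nl: "norm z1 \<le> 1" "norm z2 \<le> 1" "norm z3 \<le> 1" using n by simp_all
  have p1: "n2*n3 < 1" "n3*n1 < 1" "n1*n2 < 1" using n0 nn prod_lt1 by simp_all
  have nP: "norm P = n1*n2*n3" unfolding P_def p_def n1_n2_n3_def using w by (simp add: norm_mult)
  have P1: "norm P < 1" unfolding nP using n0 nn p1 prod_lt1[of "n1*n2" n3] by simp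
  have K: "3 * norm (S - cnj S * P) \<le>
     (n1 * (1 - (n2 * n3)^2) + (n2 * n3) * (1 - n1^2))
   + (n2 * (1 - (n3 * n1)^2) + (n3 * n1) * (1 - n2^2))
   + (n3 * (1 - (n1 * n2)^2) + (n1 * n2) * (1 - n3^2))"
    unfolding S_def P_def s1_def s2_def p_def n1_n2_n3_def by (rule key[OF w nl])
  have t1: "n1 * (1 - (n2 * n3)^2) + (n2 * n3) * (1 - n1^2) < 1 - (n1*n2*n3)^2"
    using term_bd_strict[of n1 "n2*n3"] n0 nn p1 by (simp add: mult.assoc)
  have t2: "n2 * (1 - (n3 * n1)^2) + (n3 * n1) * (1 - n2^2) < 1 - (n1*n2*n3)^2"
    using term_bd_strict[of n2 "n3*n1"] n0 nn p1 by (simp add: mult_ac)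
  have t3: "n3 * (1 - (n1 * n2)^2) + (n1 * n2) * (1 - n3^2) < 1 - (n1*n2*n3)^2"
    using term_bd_strict[of n3 "n1*n2"] n0 nn p1 by (simp add: mult_ac)
  have C: "norm (S - cnj S * P) < 1 - norm P ^ 2" using K t1 t2 t3 unfolding nP by linarith
  have a1: "norm w1 < 1" using crit_open[of w1 w2] P1 C unfolding SP by simp
  have a2: "norm w2 < 1" using crit_open[of w2 w1] P1 C unfolding SP
    by (simp add: add.commute mult.commute)
  have "(S, P) \<in> G2" unfolding G2_def SP using a1 a2 by blast
  thus ?thesis unfolding S_def P_def .
qed

theorem mainTheorem15:
  fixes s1 s2 p \<omega> :: complex
  assumes "norm \<omega> = 1"
  shows "((s1, s2, p) \<in> Gamma3 \<longrightarrow> (s1 / 3 + \<omega> * s2 / 3, \<omega> * p) \<in> Gamma2)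
       \<and> ((s1, s2, p) \<in> G3 \<longrightarrow> (s1 / 3 + \<omega> * s2 / 3, \<omega> * p) \<in> G2)"
proof (intro conjI impI)
  assume "(s1, s2, p) \<in> Gamma3"
  then obtain z1 z2 z3 where e: "s1 = z1 + z2 + z3" "s2 = z1 * z2 + z2 * z3 + z3 * z1"
      "p = z1 * z2 * z3" and n: "norm z1 \<le> 1" "norm z2 \<le> 1" "norm z3 \<le> 1"
    unfolding Gamma3_def by blast
  show "(s1 / 3 + \<omega> * s2 / 3, \<omega> * p) \<in> Gamma2"
    unfolding e by (rule closed_case[OF assms n])
next
  assume "(s1, s2, p) \<in> G3"
  then obtain z1 z2 z3 where e: "s1 = z1 + z2 + z3" "s2 = z1 * z2 + z2 * z3 + z3 * z1"
      "p = z1 * z2 * z3" and n: "norm z1 < 1" "norm z2 < 1" "norm z3 < 1"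
    unfolding G3_def by blast
  show "(s1 / 3 + \<omega> * s2 / 3, \<omega> * p) \<in> G2"
    unfolding e by (rule open_case[OF assms n])
qed

end
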